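(* Let $\mu_Y\in\mathbb{R}$, $\sigma_Y>0$, $n\ge 2$, and let $X_1,\dots,X_n$ be i.i.d. with $X_i\sim LN(\mu_Y,\sigma_Y^2)$. Let $A_n=\frac1n\sum_{i=1}^n X_i$, $H_n=n\big/\sum_{i=1}^n (1/X_i)$, $K_n=\frac{A_n}{H_n}-1$, and $k=C_v^2=\exp(\sigma_Y^2)-1$. Then $$\operatorname{Var}(K_n)=\frac{2(n-1)}{n^2}\,k^2\left(1+k+\frac{k^2}{2n}\right)=\frac{2(n-1)}{n^2}\,C_v^4\left(1+C_v^2+\frac{C_v^4}{2n}\right),$$ and consequently $$\operatorname{sd}(K_n)=\frac{k}{n}\sqrt{2(n-1)\left(1+k+\frac{k^2}{2n}\right)}.$$
   Context: $X\sim LN(\mu_Y,\sigma_Y^2)$ means $\ln X\sim N(\mu_Y,\sigma_Y^2)$. For such $X$, $C_v=\sqrt{\operatorname{Var}(X)}/E[X]$ is the coefficient of variation and $k=E[X]\,E[1/X]-1$; one has $k=C_v^2=\exp(\sigma_Y^2)-1$. $\operatorname{sd}$ denotes the standard deviation (square root of the variance). *)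

theory Defs
  imports "HOL-Probability.Probability"
begin

definition lognormal_rv :: "'a measure \<Rightarrow> ('a \<Rightarrow> real) \<Rightarrow> real \<Rightarrow> real \<Rightarrow> bool" where
  "lognormal_rv M X m sg \<longleftrightarrow>
     X \<in> borel_measurable M \<and> (AE w in M. 0 < X w) \<and>
     distributed M lborel (\<lambda>w. ln (X w)) (\<lambda>y. ennreal (normal_density m sg y))"

end

theory Submission
  imports Defs
begin


lemma normal_shift:
  assumes "0 < sg"
  shows "exp (a * y) * normal_density m sg y = exp (a*m + a\<^sup>2* sg\<^sup>2/2) * normal_density (m + a* sg\<^sup>2) sg y"
proof -
  have "a*y + (-(y - m)\<^sup>2/ (2 * sg\<^sup>2)) = (a*m + a\<^sup>2* sg\<^sup>2/2) + (-(y - (m + a* sg\<^sup>2))\<^sup>2/ (2 * sg\<^sup>2))"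
    using assms by (simp add: field_simps power2_eq_square)
  then show ?thesis unfolding normal_density_def
    by (simp add: exp_add[symmetric] algebra_simps)
qed

lemma lognormal_moment:
  assumes "prob_space M" "lognormal_rv M Y m sg" "0 < sg"
  shows "integrable M (\<lambda>w. exp (a * ln (Y w)))"
    and "integral\<^sup>L M (\<lambda>w. exp (a * ln (Y w))) = exp (a*m + a\<^sup>2* sg\<^sup>2/2)"
proof -
  have D: "distributed M lborel (\<lambda>w. ln (Y w)) (\<lambda>y. ennreal (normal_density m sg y))"
    using assms(2) unfolding lognormal_rv_def by auto
  have eq: "(\<lambda>y. normal_density m sg y * exp (a * y)) = (\<lambda>y. exp (a*m + a\<^sup>2* sg\<^sup>2/2) * normal_density (m + a* sg\<^sup>2) sg y)"
    using normal_shift[OF assms(3), of a] by (auto simp: fun_eq_iff mult.commute)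
  have "integrable lborel (\<lambda>y. normal_density m sg y * exp (a * y))"
    unfolding eq using assms(3) by simp
  then show "integrable M (\<lambda>w. exp (a * ln (Y w)))"
    using distributed_integrable[OF D, of "\<lambda>y. exp (a*y)"] by simp
  have "(\<integral>y. normal_density m sg y * exp (a * y) \<partial>lborel) = exp (a*m + a\<^sup>2* sg\<^sup>2/2)"
    unfolding eq using assms(3) by simp
  then show "integral\<^sup>L M (\<lambda>w. exp (a * ln (Y w))) = exp (a*m + a\<^sup>2* sg\<^sup>2/2)"
    using distributed_integral[OF D, of "\<lambda>y. exp (a*y)"] by simp
qed



lemma sum_delta1:
  assumes "finite A" "i \<in> A"
  shows "(\<Sum>m\<in>A. (of_bool (m = i) :: real)) = 1"
  using assms by (simp add: of_bool_def)

lemma sum_delta_c: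
  assumes "finite A" "i \<in> A"
  shows "(\<Sum>m\<in>A. c * (of_bool (m = i) :: real)) = c"
  using sum_delta1[OF assms] by (simp add: sum_distrib_left[symmetric])

lemma sq2:
  fixes A :: "nat set" and mu sg :: real
  assumes "finite A" "i \<in> A" "j \<in> A"
  shows "(\<Sum>m\<in>A. (of_bool (m = i) - of_bool (m = j)) * mu + (of_bool (m = i) - of_bool (m = j))\<^sup>2 * sg\<^sup>2 / 2)
     = sg\<^sup>2 * (1 - of_bool (i = j))"
proof -
  have e: "(of_bool (m = i) - of_bool (m = j)) * mu + (of_bool (m = i) - of_bool (m = j))\<^sup>2 * sg\<^sup>2 / 2
     = mu * of_bool (m = i) - mu * of_bool (m = j) + sg\<^sup>2/2 * of_bool (m = i) + sg\<^sup>2/2 * of_bool (m = j)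
       - (sg\<^sup>2 * of_bool (i = j)) * of_bool (m = i)" for m
    by (simp add: of_bool_def power2_eq_square algebra_simps)
  show ?thesis
    unfolding e using assms
    by (simp only: sum.distrib sum_subtractf sum_delta_c) (simp add: algebra_simps)
qed

lemma sq4:
  fixes A :: "nat set" and mu sg :: real
  assumes "finite A" "i \<in> A" "j \<in> A" "k \<in> A" "l \<in> A"
  shows "(\<Sum>m\<in>A. (of_bool (m = i) - of_bool (m = j) + of_bool (m = k) - of_bool (m = l)) * mu
        + (of_bool (m = i) - of_bool (m = j) + of_bool (m = k) - of_bool (m = l))\<^sup>2 * sg\<^sup>2 / 2)
     = sg\<^sup>2 * (2 + of_bool (i = k) + of_bool (j = l) - of_bool (i = j) - of_bool (i = l) - of_bool (k = j) - of_bool (k = l))"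
proof -
  have e: "(of_bool (m = i) - of_bool (m = j) + of_bool (m = k) - of_bool (m = l)) * mu
        + (of_bool (m = i) - of_bool (m = j) + of_bool (m = k) - of_bool (m = l))\<^sup>2 * sg\<^sup>2 / (2::real)
     = mu * of_bool (m = i) - mu * of_bool (m = j) + mu * of_bool (m = k) - mu * of_bool (m = l)
       + sg\<^sup>2/2 * of_bool (m = i) + sg\<^sup>2/2 * of_bool (m = j) + sg\<^sup>2/2 * of_bool (m = k) + sg\<^sup>2/2 * of_bool (m = l)
          + (sg\<^sup>2 * of_bool (i = k)) * of_bool (m = i) + (sg\<^sup>2 * of_bool (j = l)) * of_bool (m = j)
          - (sg\<^sup>2 * of_bool (i = j)) * of_bool (m = i) - (sg\<^sup>2 * of_bool (i = l)) * of_bool (m = i)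
          - (sg\<^sup>2 * of_bool (k = j)) * of_bool (m = k) - (sg\<^sup>2 * of_bool (k = l)) * of_bool (m = k)" for m
    by (simp add: of_bool_def power2_eq_square algebra_simps)
  show ?thesis
    unfolding e using assms
    by (simp only: sum.distrib sum_subtractf sum_delta_c) (simp add: algebra_simps)
qed


lemma sum_bool_eq:
  fixes F :: "bool \<Rightarrow> real"
  assumes "finite I" "i \<in> I"
  shows "(\<Sum>k\<in>I. F (i = k)) = F True + (real (card I) - 1) * F False"
proof -
  have "(\<Sum>k\<in>I. F (i = k)) = F (i = i) + (\<Sum>k\<in>I - {i}. F (i = k))"
    by (rule sum.remove[OF assms])
  also have "(\<Sum>k\<in>I - {i}. F (i = k)) = (\<Sum>k\<in>I - {i}. F False)"
    by (rule sum.cong[OF refl]) (metis Diff_iff singletonI)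
  also have "\<dots> = (real (card I) - 1) * F False"
  proof -
    have "card I \<noteq> 0" using assms by auto
    then have "card I \<ge> 1" by simp
    then show ?thesis using assms by (simp add: card_Diff_singleton of_nat_diff)
  qed
  finally show ?thesis by simp
qed
lemma sum_delta_r:
  assumes "finite A" "i \<in> A"
  shows "(\<Sum>m\<in>A. (of_bool (i = m) :: real) * f m) = f i"
proof -
  have "(\<Sum>m\<in>A. (of_bool (i = m) :: real) * f m) = (\<Sum>m\<in>A. if i = m then f m else 0)"
    by (rule sum.cong) auto
  then show ?thesis using assms by simp
qed

lemma exp_bool: "exp (c * of_bool P) = 1 + (exp c - 1) * of_bool P"
  by (cases P) auto

lemma sum_jl:
  fixes f g :: "nat \<Rightarrow> real"
  assumes "finite I"
  shows "(\<Sum>j\<in>I. \<Sum>l\<in>I. (1 + c * of_bool (j = l)) * (f j * g l))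
     = (\<Sum>j\<in>I. f j) * (\<Sum>l\<in>I. g l) + c * (\<Sum>j\<in>I. f j * g j)"
proof -
  have "(\<Sum>j\<in>I. \<Sum>l\<in>I. (1 + c * of_bool (j = l)) * (f j * g l))
      = (\<Sum>j\<in>I. (\<Sum>l\<in>I. f j * g l) + c * f j * (\<Sum>l\<in>I. of_bool (j = l) * g l))"
  proof -
    have e: "(1 + c * of_bool (j = l)) * (f j * g l) = f j * g l + (c * f j) * (of_bool (j = l) * g l)" for j l
      by (simp add: algebra_simps)
    show ?thesis unfolding e by (simp only: sum.distrib sum_distrib_left[symmetric])
  qed
  also have "\<dots> = (\<Sum>j\<in>I. (\<Sum>l\<in>I. f j * g l) + c * f j * g j)"
    by (rule sum.cong) (auto simp: sum_delta_r assms)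
  finally show ?thesis
    unfolding sum_product by (simp only: sum.distrib sum_distrib_left[symmetric] mult.assoc)
qed



lemma sum_h:
  fixes r :: real
  assumes "finite I" "i \<in> I" "k \<in> I"
  shows "(\<Sum>j\<in>I. (1 + r * of_bool (i = j)) * (1 + r * of_bool (k = j)))
     = real (card I) + 2 * r + r\<^sup>2 * of_bool (i = k)"
proof -
  have e: "(1 + r * of_bool (i = j)) * (1 + r * of_bool (k = j)) =
     1 + r * of_bool (i = j) + r * of_bool (k = j) + r\<^sup>2 * (of_bool (i = j) * of_bool (k = j))" for j
    by (simp add: algebra_simps power2_eq_square)
  have a: "(\<Sum>j\<in>I. of_bool (i = j) * (of_bool (k = j)::real)) = of_bool (k = i)"
    by (rule sum_delta_r[OF assms(1,2)])
  have b: "(\<Sum>j\<in>I. (of_bool (i = j)::real)) = 1"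
    using sum_delta_r[OF assms(1,2), of "\<lambda>_. 1"] by simp
  have c: "(\<Sum>j\<in>I. (of_bool (k = j)::real)) = 1"
    using sum_delta_r[OF assms(1,3), of "\<lambda>_. 1"] by simp
  show ?thesis unfolding e
    by (simp only: sum.distrib sum_distrib_left[symmetric] a b c sum_constant)
       (simp add: eq_commute)
qed

lemma alg:
  fixes q n :: real
  assumes "q > 0" "n \<noteq> 0"
  shows "n * (q\<^sup>2 * (1 + (q - 1)) * ((n + 2 * (1/q - 1) + (1/q - 1)\<^sup>2)\<^sup>2 + (q - 1) * (n + 2 * (2 * (1/q - 1) + (1/q - 1)\<^sup>2) + (2 * (1/q - 1) + (1/q - 1)\<^sup>2)\<^sup>2))
      + (n - 1) * (q\<^sup>2 * ((n + 2 * (1/q - 1))\<^sup>2 + (q - 1) * (n + 2 * (2 * (1/q - 1) + (1/q - 1)\<^sup>2)))))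
   = 2 * (n - 1) * n\<^sup>2 * (q - 1)\<^sup>2 * (1 + (q - 1) + (q - 1)\<^sup>2 / (2 * n)) + (n + n * (n - 1) * q)\<^sup>2"
proof -
  have a: "1/q - 1 = (1 - q) / q" using assms by (simp add: field_simps)
  have b: "2 * ((1 - q) / q) + ((1 - q) / q)\<^sup>2 = (1 - q\<^sup>2) / q\<^sup>2" using assms by (simp add: field_simps power2_eq_square)
  show ?thesis unfolding a b using assms
    by (simp add: field_simps power2_eq_square)
qed

lemma comb4:
  fixes s :: real and I :: "nat set"
  assumes "finite I"
  defines "n \<equiv> real (card I)" and "q \<equiv> exp s"
  shows "(\<Sum>i\<in>I. \<Sum>k\<in>I. \<Sum>j\<in>I. \<Sum>l\<in>I. exp (s * (2 + of_bool (i = k) + of_bool (j = l)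
            - of_bool (i = j) - of_bool (i = l) - of_bool (k = j) - of_bool (k = l))))
     = 2 * (n - 1) * n\<^sup>2 * (q - 1)\<^sup>2 * (1 + (q - 1) + (q - 1)\<^sup>2 / (2 * n)) + (n + n * (n - 1) * q)\<^sup>2"
proof -
  define r where "r = exp (- s) - 1"
  define r' where "r' = 2 * r + r\<^sup>2"
  define h where "h i k j = (1 + r * of_bool (i = j)) * (1 + r * of_bool (k = j))" for i k j :: nat
  have t: "exp (s * (2 + of_bool (i = k) + of_bool (j = l)
            - of_bool (i = j) - of_bool (i = l) - of_bool (k = j) - of_bool (k = l)))
     = exp (2 * s) * (1 + (q - 1) * of_bool (i = k)) * ((1 + (q - 1) * of_bool (j = l)) * (h i k j * h i k l))"
    for i k j l :: nat
  proof -
    have "s * (2 + of_bool (i = k) + of_bool (j = l)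
            - of_bool (i = j) - of_bool (i = l) - of_bool (k = j) - of_bool (k = l))
       = 2 * s + s * of_bool (i = k) + s * of_bool (j = l) + (- s) * of_bool (i = j)
         + (- s) * of_bool (k = j) + (- s) * of_bool (i = l) + (- s) * of_bool (k = l)"
      by (simp add: algebra_simps)
    then have "exp (s * (2 + of_bool (i = k) + of_bool (j = l)
            - of_bool (i = j) - of_bool (i = l) - of_bool (k = j) - of_bool (k = l)))
       = exp (2 * s) * exp (s * of_bool (i = k)) * exp (s * of_bool (j = l)) * exp ((- s) * of_bool (i = j))
         * exp ((- s) * of_bool (k = j)) * exp ((- s) * of_bool (i = l)) * exp ((- s) * of_bool (k = l))"
      by (simp only: exp_add)
    also have "\<dots> = exp (2 * s) * (1 + (q - 1) * of_bool (i = k)) * (1 + (q - 1) * of_bool (j = l))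
         * (1 + r * of_bool (i = j)) * (1 + r * of_bool (k = j)) * (1 + r * of_bool (i = l)) * (1 + r * of_bool (k = l))"
      unfolding exp_bool q_def r_def by (rule refl)
    finally show ?thesis
      unfolding h_def by (simp only: mult.assoc mult.left_commute)
  qed
  have hh: "h i k j * h i k j = (1 + r' * of_bool (i = j)) * (1 + r' * of_bool (k = j))" for i k j
    unfolding h_def r'_def by (simp add: of_bool_def power2_eq_square algebra_simps)
  have inner: "(\<Sum>j\<in>I. \<Sum>l\<in>I. (1 + (q - 1) * of_bool (j = l)) * (h i k j * h i k l))
     = (n + 2 * r + r\<^sup>2 * of_bool (i = k))\<^sup>2 + (q - 1) * (n + 2 * r' + r'\<^sup>2 * of_bool (i = k))"
    if "i \<in> I" "k \<in> I" for i k
  proof -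
    have "(\<Sum>j\<in>I. h i k j) = n + 2 * r + r\<^sup>2 * of_bool (i = k)"
      using sum_h[OF assms(1) that, of r] by (simp add: h_def n_def)
    moreover have "(\<Sum>j\<in>I. h i k j * h i k j) = n + 2 * r' + r'\<^sup>2 * of_bool (i = k)"
      unfolding hh using sum_h[OF assms(1) that, of r'] by (simp add: n_def)
    ultimately show ?thesis
      unfolding sum_jl[OF assms(1)] by (simp only: power2_eq_square)
  qed
  define F where "F b = exp (2 * s) * (1 + (q - 1) * of_bool b) *
      ((n + 2 * r + r\<^sup>2 * of_bool b)\<^sup>2 + (q - 1) * (n + 2 * r' + r'\<^sup>2 * of_bool b))" for b
  have "(\<Sum>i\<in>I. \<Sum>k\<in>I. \<Sum>j\<in>I. \<Sum>l\<in>I. exp (s * (2 + of_bool (i = k) + of_bool (j = l)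
            - of_bool (i = j) - of_bool (i = l) - of_bool (k = j) - of_bool (k = l))))
      = (\<Sum>i\<in>I. \<Sum>k\<in>I. F (i = k))"
    unfolding t
  proof (intro sum.cong refl)
    fix i k assume ik: "i \<in> I" "k \<in> I"
    show "(\<Sum>j\<in>I. \<Sum>l\<in>I. exp (2 * s) * (1 + (q - 1) * of_bool (i = k)) *
              ((1 + (q - 1) * of_bool (j = l)) * (h i k j * h i k l))) = F (i = k)"
      unfolding F_def inner[OF ik, symmetric] by (simp only: sum_distrib_left)
  qed
  also have "\<dots> = (\<Sum>i\<in>I. F True + (n - 1) * F False)"
    by (intro sum.cong refl) (simp only: sum_bool_eq[OF assms(1)] n_def)
  also have "\<dots> = n * (F True + (n - 1) * F False)"
    by (simp add: n_def)
  also have "\<dots> = 2 * (n - 1) * n\<^sup>2 * (q - 1)\<^sup>2 * (1 + (q - 1) + (q - 1)\<^sup>2 / (2 * n)) + (n + n * (n - 1) * q)\<^sup>2"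
  proof -
    have q0: "q > 0" unfolding q_def by simp
    have r: "r = 1 / q - 1" unfolding r_def q_def by (simp add: exp_minus field_simps)
    have e2: "exp (2 * s) = q\<^sup>2" unfolding q_def by (simp add: exp_double[symmetric] power2_eq_square exp_add[symmetric])
    show ?thesis
    proof (cases "n = 0")
      case True then show ?thesis by simp
    next
      case False
      show ?thesis unfolding F_def e2 r'_def r using alg[OF q0 False] by simp
    qed
  qed
  finally show ?thesis .
qed


lemma comb2:
  fixes s :: real and I :: "nat set"
  assumes "finite I"
  shows "(\<Sum>i\<in>I. \<Sum>j\<in>I. exp (s * (1 - of_bool (i = j)))) = real (card I) + real (card I) * (real (card I) - 1) * exp s"
proof -
  have "(\<Sum>i\<in>I. \<Sum>j\<in>I. exp (s * (1 - of_bool (i = j)))) = (\<Sum>i\<in>I. 1 + (real (card I) - 1) * exp s)"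
    by (intro sum.cong refl) (simp add: sum_bool_eq[OF assms, where F="\<lambda>b. exp (s * (1 - of_bool b))"])
  then show ?thesis by (simp add: algebra_simps)
qed

lemma sum_delta_l:
  assumes "finite A" "i \<in> A"
  shows "(\<Sum>m\<in>A. (of_bool (m = i) :: real) * f m) = f i"
  using sum_delta_r[OF assms, of f] by (simp add: eq_commute)

lemma prod_moment:
  fixes M :: "'a measure" and X :: "nat \<Rightarrow> 'a \<Rightarrow> real" and e :: "nat \<Rightarrow> real"
  assumes "prob_space M" "0 < sg" "finite I"
    and "prob_space.indep_vars M (\<lambda>_. borel) X I"
    and "\<And>i. i \<in> I \<Longrightarrow> lognormal_rv M (X i) mu sg"
  shows "integrable M (\<lambda>w. exp (\<Sum>m\<in>I. e m * ln (X m w)))"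
    and "integral\<^sup>L M (\<lambda>w. exp (\<Sum>m\<in>I. e m * ln (X m w))) = exp (\<Sum>m\<in>I. e m * mu + (e m)\<^sup>2 * sg\<^sup>2 / 2)"
proof -
  interpret P: prob_space M by fact
  have ind: "P.indep_vars (\<lambda>_. borel) (\<lambda>m w. exp (e m * ln (X m w))) I"
    by (rule P.indep_vars_compose2[OF assms(4)]) measurable
  have int: "integrable M (\<lambda>w. exp (e m * ln (X m w)))" if "m \<in> I" for m
    using lognormal_moment(1)[OF assms(1) assms(5)[OF that] assms(2)] .
  have eq: "(\<lambda>w. exp (\<Sum>m\<in>I. e m * ln (X m w))) = (\<lambda>w. \<Prod>m\<in>I. exp (e m * ln (X m w)))"
    by (simp add: exp_sum[OF assms(3)])
  show "integrable M (\<lambda>w. exp (\<Sum>m\<in>I. e m * ln (X m w)))"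
    unfolding eq by (rule P.indep_vars_integrable[OF assms(3) ind int])
  have "integral\<^sup>L M (\<lambda>w. exp (\<Sum>m\<in>I. e m * ln (X m w))) = (\<Prod>m\<in>I. integral\<^sup>L M (\<lambda>w. exp (e m * ln (X m w))))"
    unfolding eq by (rule P.indep_vars_lebesgue_integral[OF assms(3) ind int])
  also have "\<dots> = (\<Prod>m\<in>I. exp (e m * mu + (e m)\<^sup>2 * sg\<^sup>2 / 2))"
    by (intro prod.cong refl lognormal_moment(2)[OF assms(1) assms(5) assms(2)])
  also have "\<dots> = exp (\<Sum>m\<in>I. e m * mu + (e m)\<^sup>2 * sg\<^sup>2 / 2)"
    by (simp add: exp_sum[OF assms(3)])
  finally show "integral\<^sup>L M (\<lambda>w. exp (\<Sum>m\<in>I. e m * ln (X m w))) = exp (\<Sum>m\<in>I. e m * mu + (e m)\<^sup>2 * sg\<^sup>2 / 2)" .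
qed


theorem proposition3:
  fixes M :: "'a measure" and X :: "nat \<Rightarrow> 'a \<Rightarrow> real"
    and mu sg :: real and n :: nat
  assumes "prob_space M"
    and "0 < sg" and "2 \<le> n"
    and "prob_space.indep_vars M (\<lambda>_. borel) X {1..n}"
    and "\<And>i. i \<in> {1..n} \<Longrightarrow> lognormal_rv M (X i) mu sg"
  defines "A \<equiv> (\<lambda>w. (\<Sum>i=1..n. X i w) / real n)"
    and "H \<equiv> (\<lambda>w. real n / (\<Sum>i=1..n. 1 / X i w))"
    and "k \<equiv> exp (sg\<^sup>2) - 1"
  defines "K \<equiv> (\<lambda>w. A w / H w - 1)"
  shows "integrable M (\<lambda>w. (K w)\<^sup>2)
    \<and> prob_space.variance M K = 2 * (real n - 1) / (real n)\<^sup>2 * k\<^sup>2 * (1 + k + k\<^sup>2 / (2 * real n))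
    \<and> sqrt (prob_space.variance M K) = k / real n * sqrt (2 * (real n - 1) * (1 + k + k\<^sup>2 / (2 * real n)))"
proof -
  interpret P: prob_space M by fact
  define I where "I = {1..n}"
  have fI: "finite I" and cI: "card I = n" unfolding I_def by auto
  define Z where "Z i j w = exp (ln (X i w) - ln (X j w))" for i j w
  define S where "S w = (\<Sum>i\<in>I. \<Sum>j\<in>I. Z i j w)" for w
  define q where "q = exp (sg\<^sup>2)"
  have meas[measurable]: "X i \<in> borel_measurable M" if "i \<in> I" for i
    using assms(5) that unfolding I_def lognormal_rv_def by auto
  have Z2: "integrable M (Z i j) \<and> integral\<^sup>L M (Z i j) = exp (sg\<^sup>2 * (1 - of_bool (i = j)))"
    if "i \<in> I" "j \<in> I" for i j
  proof -
    define e where "e m = (of_bool (m = i) - of_bool (m = j) :: real)" for m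
    have "Z i j = (\<lambda>w. exp (\<Sum>m\<in>I. e m * ln (X m w)))"
      unfolding Z_def e_def
      by (simp add: fun_eq_iff left_diff_distrib sum_subtractf sum_delta_l[OF fI that(1)] sum_delta_l[OF fI that(2)])
    moreover have "(\<Sum>m\<in>I. e m * mu + (e m)\<^sup>2 * sg\<^sup>2 / 2) = sg\<^sup>2 * (1 - of_bool (i = j))"
      unfolding e_def by (rule sq2[OF fI that])
    ultimately show ?thesis
      using prod_moment[OF assms(1,2) fI assms(4)[folded I_def] assms(5)[folded I_def], where e=e] by simp
  qed
  have Z4: "integrable M (\<lambda>w. Z i j w * Z k l w) \<and> integral\<^sup>L M (\<lambda>w. Z i j w * Z k l w)
      = exp (sg\<^sup>2 * (2 + of_bool (i = k) + of_bool (j = l) - of_bool (i = j) - of_bool (i = l) - of_bool (k = j) - of_bool (k = l)))"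
    if "i \<in> I" "j \<in> I" "k \<in> I" "l \<in> I" for i j k l
  proof -
    define e where "e m = (of_bool (m = i) - of_bool (m = j) + of_bool (m = k) - of_bool (m = l) :: real)" for m
    have "(\<lambda>w. Z i j w * Z k l w) = (\<lambda>w. exp (\<Sum>m\<in>I. e m * ln (X m w)))"
      unfolding Z_def e_def
      by (simp add: fun_eq_iff exp_add[symmetric] left_diff_distrib distrib_right sum.distrib sum_subtractf
          sum_delta_l[OF fI that(1)] sum_delta_l[OF fI that(2)] sum_delta_l[OF fI that(3)] sum_delta_l[OF fI that(4)])
    moreover have "(\<Sum>m\<in>I. e m * mu + (e m)\<^sup>2 * sg\<^sup>2 / 2) = sg\<^sup>2 * (2 + of_bool (i = k) + of_bool (j = l) - of_bool (i = j) - of_bool (i = l) - of_bool (k = j) - of_bool (k = l))"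
      unfolding e_def by (rule sq4[OF fI that])
    ultimately show ?thesis
      using prod_moment[OF assms(1,2) fI assms(4)[folded I_def] assms(5)[folded I_def], where e=e] by simp
  qed
  have Nge: "real n \<ge> 2" using assms(3) by simp
  have cI': "real (card I) = real n" using cI by simp
  have intS: "integrable M S" unfolding S_def using Z2 by (intro Bochner_Integration.integrable_sum) auto
  have ES: "integral\<^sup>L M S = real n + real n * (real n - 1) * q"
  proof -
    have "integral\<^sup>L M S = (\<Sum>i\<in>I. \<Sum>j\<in>I. integral\<^sup>L M (Z i j))"
      unfolding S_def using Z2 by (subst Bochner_Integration.integral_sum) (auto intro!: Bochner_Integration.integrable_sum sum.cong Bochner_Integration.integral_sum)
    also have "\<dots> = (\<Sum>i\<in>I. \<Sum>j\<in>I. exp (sg\<^sup>2 * (1 - of_bool (i = j))))"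
      using Z2 by (intro sum.cong refl) auto
    also have "\<dots> = real n + real n * (real n - 1) * q"
      unfolding comb2[OF fI] cI' q_def ..
    finally show ?thesis .
  qed
  have S2eq: "(S w)\<^sup>2 = (\<Sum>i\<in>I. \<Sum>k\<in>I. \<Sum>j\<in>I. \<Sum>l\<in>I. Z i j w * Z k l w)" for w
    unfolding S_def power2_eq_square sum_product ..
  have intS2: "integrable M (\<lambda>w. (S w)\<^sup>2)"
    unfolding S2eq using Z4 by (intro Bochner_Integration.integrable_sum) auto
  have ES2: "integral\<^sup>L M (\<lambda>w. (S w)\<^sup>2) = 2 * (real n - 1) * (real n)\<^sup>2 * (q - 1)\<^sup>2 * (1 + (q - 1) + (q - 1)\<^sup>2 / (2 * real n)) + (real n + real n * (real n - 1) * q)\<^sup>2"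
  proof -
    have "integral\<^sup>L M (\<lambda>w. (S w)\<^sup>2) = (\<Sum>i\<in>I. \<Sum>k\<in>I. \<Sum>j\<in>I. \<Sum>l\<in>I. integral\<^sup>L M (\<lambda>w. Z i j w * Z k l w))"
      unfolding S2eq using Z4
      by (subst Bochner_Integration.integral_sum, force intro!: Bochner_Integration.integrable_sum, intro sum.cong refl,
          subst Bochner_Integration.integral_sum, force intro!: Bochner_Integration.integrable_sum, intro sum.cong refl,
          subst Bochner_Integration.integral_sum, force intro!: Bochner_Integration.integrable_sum, intro sum.cong refl,
          subst Bochner_Integration.integral_sum, force intro!: Bochner_Integration.integrable_sum, intro sum.cong refl) 
    also have "\<dots> = (\<Sum>i\<in>I. \<Sum>k\<in>I. \<Sum>j\<in>I. \<Sum>l\<in>I. exp (sg\<^sup>2 * (2 + of_bool (i = k) + of_bool (j = l) - of_bool (i = j) - of_bool (i = l) - of_bool (k = j) - of_bool (k = l))))"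
      using Z4 by (intro sum.cong refl) auto
    also have "\<dots> = 2 * (real n - 1) * (real n)\<^sup>2 * (q - 1)\<^sup>2 * (1 + (q - 1) + (q - 1)\<^sup>2 / (2 * real n)) + (real n + real n * (real n - 1) * q)\<^sup>2"
      unfolding comb4[OF fI] cI' q_def ..
    finally show ?thesis .
  qed
  define K' where "K' w = S w / (real n)\<^sup>2 - 1" for w
  have measS[measurable]: "S \<in> borel_measurable M"
    unfolding S_def Z_def by measurable
  have measK: "K \<in> borel_measurable M"
    unfolding K_def A_def H_def I_def[symmetric] by measurable
  have measK': "K' \<in> borel_measurable M" unfolding K'_def by measurable
  have AEpos: "AE w in M. \<forall>i\<in>I. 0 < X i w"
    using assms(5) by (intro AE_finite_allI[OF fI]) (auto simp: lognormal_rv_def I_def)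
  have In: "I \<noteq> {}" using assms(3) unfolding I_def by auto
  have AEK: "AE w in M. K w = K' w"
    using AEpos
  proof eventually_elim
    case (elim w)
    have pos: "0 < (\<Sum>i\<in>I. 1 / X i w)" using elim fI In by (intro sum_pos) auto
    have Zw: "Z i j w = X i w * (1 / X j w)" if "i \<in> I" "j \<in> I" for i j
      using elim that unfolding Z_def by (simp add: exp_diff)
    have "(\<Sum>i\<in>I. X i w) * (\<Sum>j\<in>I. 1 / X j w) = S w"
      unfolding S_def sum_product using Zw by (intro sum.cong refl) auto
    then show ?case
      unfolding K_def K'_def A_def H_def I_def[symmetric] using pos Nge
      by (simp add: field_simps power2_eq_square)
  qed
  have K2: "(K' w)\<^sup>2 = (S w)\<^sup>2 / (real n)^4 - 2 * S w / (real n)\<^sup>2 + 1" for w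
    unfolding K'_def using Nge by (simp add: field_simps power2_eq_square power4_eq_xxxx)
  have intK': "integrable M K'" unfolding K'_def using intS by auto
  have intK'2: "integrable M (\<lambda>w. (K' w)\<^sup>2)" unfolding K2 using intS intS2 by auto
  have EK': "integral\<^sup>L M K' = integral\<^sup>L M S / (real n)\<^sup>2 - 1"
    unfolding K'_def using intS by (simp add: P.prob_space)
  have EK'2: "integral\<^sup>L M (\<lambda>w. (K' w)\<^sup>2) = integral\<^sup>L M (\<lambda>w. (S w)\<^sup>2) / (real n)^4 - 2 * integral\<^sup>L M S / (real n)\<^sup>2 + 1"
    unfolding K2 using intS intS2 by (simp add: P.prob_space)
  have AEK2: "AE w in M. (K w)\<^sup>2 = (K' w)\<^sup>2" using AEK by eventually_elim simp
  have intK: "integrable M K" using integrable_cong_AE[OF measK measK' AEK] intK' by simp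
  have intK2: "integrable M (\<lambda>w. (K w)\<^sup>2)"
    using integrable_cong_AE[OF _ _ AEK2] intK'2 measK measK' by simp
  have EK: "integral\<^sup>L M K = integral\<^sup>L M K'" by (rule integral_cong_AE[OF measK measK' AEK])
  have EK2: "integral\<^sup>L M (\<lambda>w. (K w)\<^sup>2) = integral\<^sup>L M (\<lambda>w. (K' w)\<^sup>2)"
    using integral_cong_AE[OF _ _ AEK2] measK measK' by simp
  have var: "P.variance K = 2 * (real n - 1) / (real n)\<^sup>2 * k\<^sup>2 * (1 + k + k\<^sup>2 / (2 * real n))"
  proof -
    have "P.variance K = integral\<^sup>L M (\<lambda>w. (K w)\<^sup>2) - (integral\<^sup>L M K)\<^sup>2"
      by (rule P.variance_eq[OF intK intK2])
    also have "\<dots> = 2 * (real n - 1) / (real n)\<^sup>2 * k\<^sup>2 * (1 + k + k\<^sup>2 / (2 * real n))"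
      unfolding EK EK2 EK'2 EK' ES ES2 k_def q_def[symmetric] using Nge
      by (simp add: field_simps power2_eq_square power4_eq_xxxx)
    finally show ?thesis .
  qed
  have k0: "k \<ge> 0" unfolding k_def using assms(2) by simp
  have "P.variance K = (k / real n)\<^sup>2 * (2 * (real n - 1) * (1 + k + k\<^sup>2 / (2 * real n)))"
    unfolding var by (simp add: power_divide)
  then have "sqrt (P.variance K) = k / real n * sqrt (2 * (real n - 1) * (1 + k + k\<^sup>2 / (2 * real n)))"
    using k0 Nge by (simp add: real_sqrt_mult)
  then show ?thesis using intK2 var by simp
qed

end
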